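(* No duality of a thick building of type $\mathsf{F}_4$ is domestic.
   Context: A duality of an $\mathsf{F}_4$ building is an automorphism inducing the nontrivial automorphism of the $\mathsf{F}_4$ Coxeter graph. An automorphism is domestic if it maps no chamber to an opposite chamber (a chamber at maximal gallery distance). *)

theory Defs
  imports "HOL-Analysis.Analysis"
begin

text \<open>Simple roots of F4 (Bourbaki labelling 1-2=>3-4):
  a1 = e2 - e3, a2 = e3 - e4, a3 = e4, a4 = (e1 - e2 - e3 - e4)/2.
  Coxeter diagram: m(1,2)=3, m(2,3)=4, m(3,4)=3, other pairs commute.\<close>

definition F4_root :: "nat \<Rightarrow> real^4" where
  "F4_root i =
     (if i = 1 then vector [0, 1, -1, 0]
      else if i = 2 then vector [0, 0, 1, -1]
      else if i = 3 then vector [0, 0, 0, 1]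
      else vector [1/2, -1/2, -1/2, -1/2])"

definition refl :: "real^4 \<Rightarrow> real^4 \<Rightarrow> real^4" where
  "refl a v = v - (2 * (v \<bullet> a) / (a \<bullet> a)) *\<^sub>R a"

definition F4_gen :: "nat \<Rightarrow> (real^4 \<Rightarrow> real^4)" where
  "F4_gen i = refl (F4_root i)"

definition F4_word :: "nat list \<Rightarrow> (real^4 \<Rightarrow> real^4)" where
  "F4_word ws = foldr (\<circ>) (map F4_gen ws) id"

definition F4_W :: "(real^4 \<Rightarrow> real^4) set" where
  "F4_W = {F4_word ws | ws. set ws \<subseteq> {1..4}}"

definition F4_len :: "(real^4 \<Rightarrow> real^4) \<Rightarrow> nat" where
  "F4_len w = (LEAST n. \<exists>ws. set ws \<subseteq> {1..4} \<and> length ws = n \<and> F4_word ws = w)"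

section \<open>Buildings of type F4 (W-metric approach, Abramenko--Brown Def. 5.1)\<close>

definition F4_building :: "'c set \<Rightarrow> ('c \<Rightarrow> 'c \<Rightarrow> (real^4 \<Rightarrow> real^4)) \<Rightarrow> bool" where
  "F4_building Ch \<delta> \<longleftrightarrow>
     Ch \<noteq> {} \<and>
     (\<forall>x\<in>Ch. \<forall>y\<in>Ch. \<delta> x y \<in> F4_W) \<and>
     (\<forall>x\<in>Ch. \<forall>y\<in>Ch. \<delta> x y = id \<longleftrightarrow> x = y) \<and>
     (\<forall>C\<in>Ch. \<forall>D\<in>Ch. \<forall>C'\<in>Ch. \<forall>s\<in>{1..4}. \<delta> C' C = F4_gen s \<longrightarrow>
        (\<delta> C' D \<in> {F4_gen s \<circ> \<delta> C D, \<delta> C D} \<and>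
         (F4_len (F4_gen s \<circ> \<delta> C D) = F4_len (\<delta> C D) + 1 \<longrightarrow>
            \<delta> C' D = F4_gen s \<circ> \<delta> C D))) \<and>
     (\<forall>C\<in>Ch. \<forall>D\<in>Ch. \<forall>s\<in>{1..4}.
        \<exists>C'\<in>Ch. \<delta> C' C = F4_gen s \<and> \<delta> C' D = F4_gen s \<circ> \<delta> C D)"

text \<open>Thick: every panel contains at least three chambers.\<close>
definition thick :: "'c set \<Rightarrow> ('c \<Rightarrow> 'c \<Rightarrow> (real^4 \<Rightarrow> real^4)) \<Rightarrow> bool" where
  "thick Ch \<delta> \<longleftrightarrow>
     (\<forall>C\<in>Ch. \<forall>s\<in>{1..4}. \<exists>D1\<in>Ch. \<exists>D2\<in>Ch.
        D1 \<noteq> D2 \<and> \<delta> C D1 = F4_gen s \<and> \<delta> C D2 = F4_gen s)"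

definition adjacent :: "'c set \<Rightarrow> ('c \<Rightarrow> 'c \<Rightarrow> (real^4 \<Rightarrow> real^4)) \<Rightarrow> 'c \<Rightarrow> 'c \<Rightarrow> bool" where
  "adjacent Ch \<delta> x y \<longleftrightarrow> x \<in> Ch \<and> y \<in> Ch \<and> (\<exists>i\<in>{1..4}. \<delta> x y = F4_gen i)"

definition gallery :: "'c set \<Rightarrow> ('c \<Rightarrow> 'c \<Rightarrow> (real^4 \<Rightarrow> real^4)) \<Rightarrow> 'c list \<Rightarrow> bool" where
  "gallery Ch \<delta> g \<longleftrightarrow> g \<noteq> [] \<and> set g \<subseteq> Ch \<and>
     (\<forall>k. Suc k < length g \<longrightarrow> adjacent Ch \<delta> (g ! k) (g ! Suc k))"

definition gdist :: "'c set \<Rightarrow> ('c \<Rightarrow> 'c \<Rightarrow> (real^4 \<Rightarrow> real^4)) \<Rightarrow> 'c \<Rightarrow> 'c \<Rightarrow> nat" where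
  "gdist Ch \<delta> x y = (LEAST n. \<exists>g. gallery Ch \<delta> g \<and> hd g = x \<and> last g = y \<and> length g = Suc n)"

definition opposite :: "'c set \<Rightarrow> ('c \<Rightarrow> 'c \<Rightarrow> (real^4 \<Rightarrow> real^4)) \<Rightarrow> 'c \<Rightarrow> 'c \<Rightarrow> bool" where
  "opposite Ch \<delta> x y \<longleftrightarrow> x \<in> Ch \<and> y \<in> Ch \<and>
     (\<forall>u\<in>Ch. \<forall>v\<in>Ch. gdist Ch \<delta> u v \<le> gdist Ch \<delta> x y)"

text \<open>Duality: automorphism of the chamber system mapping i-adjacency to
  sigma(i)-adjacency, where sigma(i) = 5 - i is the nontrivial automorphism
  of the F4 Coxeter graph.\<close>
definition duality :: "'c set \<Rightarrow> ('c \<Rightarrow> 'c \<Rightarrow> (real^4 \<Rightarrow> real^4)) \<Rightarrow> ('c \<Rightarrow> 'c) \<Rightarrow> bool" where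
  "duality Ch \<delta> \<theta> \<longleftrightarrow> bij_betw \<theta> Ch Ch \<and>
     (\<forall>x\<in>Ch. \<forall>y\<in>Ch. \<forall>i\<in>{1..4}.
        \<delta> x y = F4_gen i \<longleftrightarrow> \<delta> (\<theta> x) (\<theta> y) = F4_gen (5 - i))"

definition domestic :: "'c set \<Rightarrow> ('c \<Rightarrow> 'c \<Rightarrow> (real^4 \<Rightarrow> real^4)) \<Rightarrow> ('c \<Rightarrow> 'c) \<Rightarrow> bool" where
  "domestic Ch \<delta> \<theta> \<longleftrightarrow> (\<forall>x\<in>Ch. \<not> opposite Ch \<delta> x (\<theta> x))"

end

theory Submission imports Defs begin

definition v4 :: "real \<Rightarrow> real \<Rightarrow> real \<Rightarrow> real \<Rightarrow> real^4" where
  "v4 a b c d = vector [a,b,c,d]"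

lemma v4_nth [simp]:
  "v4 a b c d $ 1 = a" "v4 a b c d $ 2 = b" "v4 a b c d $ 3 = c" "v4 a b c d $ 4 = d"
  unfolding v4_def vector_def by simp_all

lemma v4_eta: "v = v4 (v$1) (v$2) (v$3) (v$4)"
  unfolding vec_eq_iff forall_4 by simp

lemma v4_eq_iff [simp]: "v4 a b c d = v4 a' b' c' d' \<longleftrightarrow> a = a' \<and> b = b' \<and> c = c' \<and> d = d'"
  unfolding vec_eq_iff forall_4 by simp

lemma v4_add [simp]: "v4 a b c d + v4 a' b' c' d' = v4 (a+a') (b+b') (c+c') (d+d')"
  unfolding vec_eq_iff forall_4 by simp
lemma v4_diff [simp]: "v4 a b c d - v4 a' b' c' d' = v4 (a-a') (b-b') (c-c') (d-d')"
  unfolding vec_eq_iff forall_4 by simp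
lemma v4_uminus [simp]: "- v4 a b c d = v4 (-a) (-b) (-c) (-d)"
  unfolding vec_eq_iff forall_4 by simp
lemma v4_scaleR [simp]: "r *\<^sub>R v4 a b c d = v4 (r*a) (r*b) (r*c) (r*d)"
  unfolding vec_eq_iff forall_4 by simp
lemma v4_inner [simp]: "v4 a b c d \<bullet> v4 a' b' c' d' = a*a' + b*b' + c*c' + d*d'"
  unfolding inner_vec_def sum_4 by simp
lemma v4_zero: "0 = v4 0 0 0 0"
  unfolding vec_eq_iff forall_4 by simp

lemma root_v4:
  "F4_root 1 = v4 0 1 (-1) 0" "F4_root 2 = v4 0 0 1 (-1)" "F4_root 3 = v4 0 0 0 1"
  "F4_root 4 = v4 (1/2) (-1/2) (-1/2) (-1/2)"
  unfolding F4_root_def v4_def by simp_all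

lemma root1_v4': "F4_root (Suc 0) = v4 0 1 (-1) 0"
  using root_v4(1) by simp

lemma gen_v4:
  "F4_gen 1 (v4 a b c d) = v4 a c b d"
  "F4_gen 2 (v4 a b c d) = v4 a b d c"
  "F4_gen 3 (v4 a b c d) = v4 a b c (-d)"
  "F4_gen 4 (v4 a b c d) = v4 (a - (a-b-c-d)/2) (b + (a-b-c-d)/2) (c + (a-b-c-d)/2) (d + (a-b-c-d)/2)"
  unfolding F4_gen_def refl_def root_v4 by (simp_all add: field_simps)

lemma gen1_v4': "F4_gen (Suc 0) (v4 a b c d) = v4 a c b d"
  using gen_v4(1) by simp

definition PosL :: "(real^4) list" where
 "PosL = [v4 0 0 1 (-1), v4 0 0 0 1, v4 0 1 (-1) 0, v4 (1/2) (-1/2) (-1/2) (-1/2), v4 0 1 0 (-1), v4 0 0 1 0, v4 (1/2) (-1/2) (-1/2) (1/2), v4 (1/2) (-1/2) (1/2) (-1/2), v4 0 0 1 1, v4 0 1 0 0, v4 (1/2) (-1/2) (1/2) (1/2), v4 0 1 0 1, v4 (1/2) (1/2) (-1/2) (-1/2), v4 0 1 1 0, v4 (1/2) (1/2) (-1/2) (1/2), v4 1 (-1) 0 0, v4 1 0 (-1) 0, v4 (1/2) (1/2) (1/2) (-1/2), v4 (1/2) (1/2) (1/2) (1/2), v4 1 0 0 (-1), v4 1 0 0 0, v4 1 0 0 1, v4 1 0 1 0, v4 1 1 0 0]"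

definition Pos :: "(real^4) set" where "Pos = set PosL"
definition Neg :: "(real^4) set" where "Neg = uminus ` Pos"
definition Phi :: "(real^4) set" where "Phi = Pos \<union> Neg"

definition cf1 :: "real^4 \<Rightarrow> real" where "cf1 v = v$1 + v$2"
definition cf2 :: "real^4 \<Rightarrow> real" where "cf2 v = 2*(v$1) + v$2 + v$3"
definition cf3 :: "real^4 \<Rightarrow> real" where "cf3 v = 3*(v$1) + v$2 + v$3 + v$4"
definition cf4 :: "real^4 \<Rightarrow> real" where "cf4 v = 2*(v$1)"

lemma Pos_cf: "\<alpha> \<in> Pos \<Longrightarrow> cf1 \<alpha> \<ge> 0 \<and> cf2 \<alpha> \<ge> 0 \<and> cf3 \<alpha> \<ge> 0 \<and> cf4 \<alpha> \<ge> 0 \<and> \<alpha> \<noteq> 0"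
  unfolding Pos_def PosL_def cf1_def cf2_def cf3_def cf4_def v4_zero by auto

lemma cf_decomp: "v = cf1 v *\<^sub>R F4_root 1 + cf2 v *\<^sub>R F4_root 2 + cf3 v *\<^sub>R F4_root 3 + cf4 v *\<^sub>R F4_root 4"
  apply (subst (1) v4_eta)
  unfolding cf1_def cf2_def cf3_def cf4_def root_v4 by (simp add: field_simps)

lemma gen_Pos1: "\<forall>\<alpha>\<in>Pos. \<alpha> \<noteq> F4_root 1 \<longrightarrow> F4_gen 1 \<alpha> \<in> Pos"
  unfolding Pos_def PosL_def root_v4 by (simp add: gen_v4 gen1_v4')
lemma gen_Pos2: "\<forall>\<alpha>\<in>Pos. \<alpha> \<noteq> F4_root 2 \<longrightarrow> F4_gen 2 \<alpha> \<in> Pos"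
  unfolding Pos_def PosL_def root_v4 by (simp add: gen_v4 gen1_v4')
lemma gen_Pos3: "\<forall>\<alpha>\<in>Pos. \<alpha> \<noteq> F4_root 3 \<longrightarrow> F4_gen 3 \<alpha> \<in> Pos"
  unfolding Pos_def PosL_def root_v4 by (simp add: gen_v4 gen1_v4')
lemma gen_Pos4: "\<forall>\<alpha>\<in>Pos. \<alpha> \<noteq> F4_root 4 \<longrightarrow> F4_gen 4 \<alpha> \<in> Pos"
  unfolding Pos_def PosL_def root_v4 by (simp add: gen_v4 gen1_v4' field_simps)


lemma root_ne0: "F4_root s \<noteq> 0"
  unfolding F4_root_def v4_def[symmetric] v4_zero by auto

lemma root_Pos: "s \<in> {1..4} \<Longrightarrow> F4_root s \<in> Pos"
proof -
  assume "s \<in> {1..4}"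
  then have "s = 1 \<or> s = 2 \<or> s = 3 \<or> s = 4" by auto
  then show ?thesis unfolding Pos_def PosL_def by (auto simp: root_v4 root1_v4')
qed

lemma gen_Pos: "s \<in> {1..4} \<Longrightarrow> \<alpha> \<in> Pos \<Longrightarrow> \<alpha> \<noteq> F4_root s \<Longrightarrow> F4_gen s \<alpha> \<in> Pos"
proof -
  assume "s \<in> {1..4}" "\<alpha> \<in> Pos" "\<alpha> \<noteq> F4_root s"
  moreover have "s = 1 \<or> s = 2 \<or> s = 3 \<or> s = 4" using \<open>s \<in> {1..4}\<close> by auto
  ultimately show ?thesis using gen_Pos1 gen_Pos2 gen_Pos3 gen_Pos4 by auto
qed

lemma Pos_not_Neg: "\<alpha> \<in> Pos \<Longrightarrow> \<alpha> \<notin> Neg"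
proof
  assume a: "\<alpha> \<in> Pos" "\<alpha> \<in> Neg"
  then obtain \<beta> where b: "\<beta> \<in> Pos" "\<alpha> = - \<beta>" unfolding Neg_def by auto
  have "cf1 (-\<alpha>) = - cf1 \<alpha>" "cf2 (-\<alpha>) = - cf2 \<alpha>" "cf3 (-\<alpha>) = - cf3 \<alpha>" "cf4 (-\<alpha>) = - cf4 \<alpha>"
    unfolding cf1_def cf2_def cf3_def cf4_def by simp_all
  with Pos_cf[OF a(1)] Pos_cf[OF b(1)] b(2)
  have "cf1 \<alpha> = 0" "cf2 \<alpha> = 0" "cf3 \<alpha> = 0" "cf4 \<alpha> = 0" by auto
  then have "\<alpha> = 0" using cf_decomp[of \<alpha>] by simp
  with Pos_cf[OF a(1)] show False by simp
qed

lemma Neg_iff: "\<alpha> \<in> Neg \<longleftrightarrow> - \<alpha> \<in> Pos"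
  unfolding Neg_def by (metis image_iff minus_minus)

lemma finite_Pos: "finite Pos" unfolding Pos_def by simp

lemma zero_not_Pos: "0 \<notin> Pos" using Pos_cf by blast

section \<open>Reflections\<close>

lemma linear_refl: "linear (refl a)"
  by (rule linearI) (simp_all add: refl_def inner_add_left algebra_simps add_divide_distrib scaleR_add_left)

lemma refl_self: "refl a a = - a" if "a \<noteq> 0"
  using that by (simp add: refl_def algebra_simps scaleR_2)

lemma refl_invol: "a \<noteq> 0 \<Longrightarrow> refl a (refl a x) = x"
  by (simp add: refl_def inner_diff_left algebra_simps)

lemma refl_inner: "a \<noteq> 0 \<Longrightarrow> refl a x \<bullet> refl a y = x \<bullet> y"
  by (simp add: refl_def inner_diff_left inner_diff_right algebra_simps inner_commute)

lemma refl_conj: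
  assumes "linear u" "\<And>x y. u x \<bullet> u y = x \<bullet> y"
  shows "u (refl a x) = refl (u a) (u x)"
  unfolding refl_def using assms by (simp add: linear_diff linear_scale)

lemma gen_invol: "F4_gen s (F4_gen s x) = x"
  unfolding F4_gen_def by (rule refl_invol[OF root_ne0])

lemma gen_invol_o: "F4_gen s \<circ> F4_gen s = id"
  by (rule ext) (simp add: gen_invol)

lemma gen_root: "F4_gen s (F4_root s) = - F4_root s"
  unfolding F4_gen_def by (rule refl_self[OF root_ne0])

lemma gen_Phi: "s \<in> {1..4} \<Longrightarrow> \<alpha> \<in> Phi \<Longrightarrow> F4_gen s \<alpha> \<in> Phi"
proof -
  assume s: "s \<in> {1..4}" and a: "\<alpha> \<in> Phi"
  have lin: "linear (F4_gen s)" unfolding F4_gen_def by (rule linear_refl)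
  show ?thesis
  proof (cases "\<alpha> \<in> Pos")
    case True
    show ?thesis
    proof (cases "\<alpha> = F4_root s")
      case c: True
      have "- F4_root s \<in> Neg" using root_Pos[OF s] Neg_iff by simp
      then show ?thesis using gen_root[of s] c unfolding Phi_def by simp
    next
      case False
      then show ?thesis using gen_Pos[OF s True] unfolding Phi_def by simp
    qed
  next
    case False
    then have "\<alpha> \<in> Neg" using a unfolding Phi_def by auto
    then have n: "- \<alpha> \<in> Pos" using Neg_iff by blast
    have e: "F4_gen s \<alpha> = - F4_gen s (- \<alpha>)" using linear_neg[OF lin, of "-\<alpha>"] by simp
    show ?thesis
    proof (cases "- \<alpha> = F4_root s")
      case True
      then have "F4_gen s \<alpha> = F4_root s" using e gen_root[of s] by simp
      then show ?thesis using root_Pos[OF s] unfolding Phi_def by auto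
    next
      case False
      have "- F4_gen s (- \<alpha>) \<in> Neg" using gen_Pos[OF s n False] Neg_iff by simp
      then show ?thesis using e unfolding Phi_def by simp
    qed
  qed
qed

lemma word_Nil [simp]: "F4_word [] = id" unfolding F4_word_def by simp
lemma word_Cons [simp]: "F4_word (s # ws) = F4_gen s \<circ> F4_word ws" unfolding F4_word_def by simp
lemma word_append: "F4_word (xs @ ys) = F4_word xs \<circ> F4_word ys"
  by (induction xs) auto

lemma word_linear: "linear (F4_word ws)"
proof (induction ws)
  case Nil then show ?case by (simp only: word_Nil linear_id)
next
  case (Cons s ws)
  have lin: "linear (F4_gen s)" unfolding F4_gen_def by (rule linear_refl)
  have "linear (F4_gen s \<circ> F4_word ws)" by (rule linear_compose[OF Cons.IH lin])
  then show ?case by (simp only: word_Cons)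
qed

lemma word_inner: "F4_word ws x \<bullet> F4_word ws y = x \<bullet> y"
  by (induction ws arbitrary: x y) (simp_all add: F4_gen_def refl_inner[OF root_ne0])

lemma word_Phi: "set ws \<subseteq> {1..4} \<Longrightarrow> \<alpha> \<in> Phi \<Longrightarrow> F4_word ws \<alpha> \<in> Phi"
  by (induction ws) (auto intro: gen_Phi)

lemma word_rev: "F4_word (rev ws) \<circ> F4_word ws = id"
proof (induction ws)
  case Nil then show ?case by simp
next
  case (Cons s ws)
  have "F4_word (rev (s # ws)) \<circ> F4_word (s # ws) = F4_word (rev ws) \<circ> (F4_gen s \<circ> F4_gen s) \<circ> F4_word ws"
    by (simp add: word_append o_assoc)
  also have "\<dots> = F4_word (rev ws) \<circ> F4_word ws" by (simp only: gen_invol_o o_id)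
  also have "\<dots> = id" by (rule Cons.IH)
  finally show ?case .
qed

lemma word_rev2: "F4_word ws \<circ> F4_word (rev ws) = id"
  by (metis rev_rev_ident word_rev)

lemma inW_iff: "w \<in> F4_W \<longleftrightarrow> (\<exists>ws. set ws \<subseteq> {1..4} \<and> F4_word ws = w)"
  unfolding F4_W_def by auto

lemma len_le: "set ws \<subseteq> {1..4} \<Longrightarrow> F4_len (F4_word ws) \<le> length ws"
  unfolding F4_len_def by (rule Least_le) auto

lemma len_ex: "w \<in> F4_W \<Longrightarrow> \<exists>ws. set ws \<subseteq> {1..4} \<and> length ws = F4_len w \<and> F4_word ws = w"
  unfolding F4_len_def inW_iff by (rule LeastI_ex) auto

lemma W_linear: "w \<in> F4_W \<Longrightarrow> linear w"
  unfolding inW_iff using word_linear by auto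
lemma W_inner: "w \<in> F4_W \<Longrightarrow> w x \<bullet> w y = x \<bullet> y"
  unfolding inW_iff using word_inner by auto
lemma W_Phi: "w \<in> F4_W \<Longrightarrow> \<alpha> \<in> Phi \<Longrightarrow> w \<alpha> \<in> Phi"
  unfolding inW_iff using word_Phi by auto
lemma W_neg: "w \<in> F4_W \<Longrightarrow> w (- x) = - w x"
  using W_linear linear_neg by blast

lemma W_gen_right: "w \<in> F4_W \<Longrightarrow> t \<in> {1..4} \<Longrightarrow> w \<circ> F4_gen t \<in> F4_W"
proof -
  assume "w \<in> F4_W" "t \<in> {1..4}"
  then obtain ws where "set ws \<subseteq> {1..4}" "F4_word ws = w" unfolding inW_iff by blast
  then have "set (ws @ [t]) \<subseteq> {1..4}" "F4_word (ws @ [t]) = w \<circ> F4_gen t"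
    using \<open>t \<in> {1..4}\<close> by (auto simp: word_append)
  then show ?thesis unfolding inW_iff by blast
qed
lemma W_gen_left: "w \<in> F4_W \<Longrightarrow> s \<in> {1..4} \<Longrightarrow> F4_gen s \<circ> w \<in> F4_W"
proof -
  assume "w \<in> F4_W" "s \<in> {1..4}"
  then obtain ws where "set ws \<subseteq> {1..4}" "F4_word ws = w" unfolding inW_iff by blast
  then have "set (s # ws) \<subseteq> {1..4}" "F4_word (s # ws) = F4_gen s \<circ> w"
    using \<open>s \<in> {1..4}\<close> by auto
  then show ?thesis unfolding inW_iff by blast
qed
lemma W_id: "id \<in> F4_W"
  unfolding inW_iff by (auto intro!: exI[where x="[]"])
lemma W_gen: "s \<in> {1..4} \<Longrightarrow> F4_gen s \<in> F4_W"
  using W_gen_left[OF W_id] by simp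


section \<open>Length theory\<close>

lemma W_root_cases:
  assumes "w \<in> F4_W" "t \<in> {1..4}"
  shows "w (F4_root t) \<in> Pos \<or> w (F4_root t) \<in> Neg"
  using W_Phi[OF assms(1)] root_Pos[OF assms(2)] unfolding Phi_def by blast

lemma gen_gen_right: "w \<circ> F4_gen t \<circ> F4_gen t = w"
  by (simp add: comp_assoc gen_invol_o)

lemma deletion:
  assumes "set ws \<subseteq> {1..4}" "t \<in> {1..4}" "F4_word ws (F4_root t) \<in> Neg"
  shows "\<exists>ws'. set ws' \<subseteq> {1..4} \<and> length ws' + 1 = length ws \<and> F4_word ws' = F4_word ws \<circ> F4_gen t"
  using assms
proof (induction ws)
  case Nil
  then have "F4_root t \<in> Neg" by simp
  then show ?case using root_Pos[OF Nil.prems(2)] Pos_not_Neg by blast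
next
  case (Cons s ws)
  have s: "s \<in> {1..4}" and ws: "set ws \<subseteq> {1..4}" using Cons.prems by auto
  show ?case
  proof (cases "F4_word ws (F4_root t) \<in> Neg")
    case True
    from Cons.IH[OF ws Cons.prems(2) True] obtain ws' where
      h: "set ws' \<subseteq> {1..4}" "length ws' + 1 = length ws" "F4_word ws' = F4_word ws \<circ> F4_gen t" by blast
    have "set (s # ws') \<subseteq> {1..4}" "length (s # ws') + 1 = length (s # ws)"
      "F4_word (s # ws') = F4_word (s # ws) \<circ> F4_gen t" using h s by (auto simp: o_assoc)
    then show ?thesis by blast
  next
    case False
    have "F4_word ws (F4_root t) \<in> Phi" using word_Phi[OF ws] root_Pos[OF Cons.prems(2)] unfolding Phi_def by blast
    with False have P: "F4_word ws (F4_root t) \<in> Pos" unfolding Phi_def by blast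
    have "F4_gen s (F4_word ws (F4_root t)) \<in> Neg" using Cons.prems(3) by simp
    then have eq: "F4_word ws (F4_root t) = F4_root s"
      using gen_Pos[OF s P] Pos_not_Neg by blast
    have pw: "F4_word ws (F4_gen t x) = F4_gen s (F4_word ws x)" for x
    proof -
      have "F4_word ws (F4_gen t x) = refl (F4_word ws (F4_root t)) (F4_word ws x)"
        unfolding F4_gen_def by (rule refl_conj[OF word_linear word_inner])
      then show ?thesis using eq by (simp add: F4_gen_def)
    qed
    have e: "F4_word (s#ws) \<circ> F4_gen t = F4_word ws"
      by (simp add: fun_eq_iff pw gen_invol)
    show ?thesis
    proof (intro exI[of _ ws] conjI)
      show "set ws \<subseteq> {1..4}" by (rule ws)
      show "length ws + 1 = length (s#ws)" by simp
      show "F4_word ws = F4_word (s # ws) \<circ> F4_gen t" by (rule e[symmetric])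
    qed
  qed
qed

lemma right_len_Neg:
  assumes w: "w \<in> F4_W" and t: "t \<in> {1..4}" and n: "w (F4_root t) \<in> Neg"
  shows "F4_len (w \<circ> F4_gen t) + 1 = F4_len w"
proof -
  obtain ws where ws: "set ws \<subseteq> {1..4}" "length ws = F4_len w" "F4_word ws = w" using len_ex[OF w] by blast
  obtain ws' where ws': "set ws' \<subseteq> {1..4}" "length ws' + 1 = length ws" "F4_word ws' = w \<circ> F4_gen t"
    using deletion[OF ws(1) t] n ws(3) by blast
  have a: "F4_len (w \<circ> F4_gen t) + 1 \<le> F4_len w" using len_le[OF ws'(1)] ws'(2,3) ws(2) by simp
  obtain us where us: "set us \<subseteq> {1..4}" "length us = F4_len (w \<circ> F4_gen t)" "F4_word us = w \<circ> F4_gen t"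
    using len_ex[OF W_gen_right[OF w t]] by blast
  have "set (us @ [t]) \<subseteq> {1..4}" using us t by auto
  moreover have "F4_word (us @ [t]) = w" using us(3) by (simp add: word_append gen_gen_right)
  ultimately have "F4_len w \<le> length (us @ [t])" using len_le by metis
  with a us(2) show ?thesis by simp
qed

lemma right_len_Pos:
  assumes w: "w \<in> F4_W" and t: "t \<in> {1..4}" and p: "w (F4_root t) \<in> Pos"
  shows "F4_len (w \<circ> F4_gen t) = F4_len w + 1"
proof -
  have "(w \<circ> F4_gen t) (F4_root t) = - w (F4_root t)" using W_neg[OF w] by (simp add: gen_root)
  then have n: "(w \<circ> F4_gen t) (F4_root t) \<in> Neg" using p Neg_iff by simp
  have "F4_len (w \<circ> F4_gen t \<circ> F4_gen t) + 1 = F4_len (w \<circ> F4_gen t)"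
    by (rule right_len_Neg[where w="w \<circ> F4_gen t", OF W_gen_right[OF w t] t n])
  then show ?thesis unfolding gen_gen_right by simp
qed

definition Ninv :: "(real^4 \<Rightarrow> real^4) \<Rightarrow> nat" where
  "Ninv w = card {\<alpha>\<in>Pos. w \<alpha> \<in> Neg}"

lemma card_split:
  assumes "r \<in> Pos"
  shows "card {\<alpha>\<in>Pos. P \<alpha>} = card {\<alpha>\<in>Pos - {r}. P \<alpha>} + (if P r then 1 else 0)"
proof (cases "P r")
  case True
  then have "{\<alpha>\<in>Pos. P \<alpha>} = insert r {\<alpha>\<in>Pos - {r}. P \<alpha>}" using assms by auto
  then show ?thesis using True finite_Pos by simp
next
  case False
  then have "{\<alpha>\<in>Pos. P \<alpha>} = {\<alpha>\<in>Pos - {r}. P \<alpha>}" by auto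
  then show ?thesis using False by simp
qed

lemma N_right:
  assumes w: "w \<in> F4_W" and t: "t \<in> {1..4}"
  shows "Ninv (w \<circ> F4_gen t) + (if w (F4_root t) \<in> Neg then 1 else 0)
       = Ninv w + (if w (F4_root t) \<in> Pos then 1 else 0)"
proof -
  let ?g = "F4_gen t" and ?r = "F4_root t"
  let ?P' = "Pos - {?r}"
  have r: "?r \<in> Pos" by (rule root_Pos[OF t])
  have gP: "?g \<alpha> \<in> ?P'" if "\<alpha> \<in> ?P'" for \<alpha>
  proof -
    have "?g \<alpha> \<in> Pos" using gen_Pos[OF t] that by auto
    moreover have "?g \<alpha> \<noteq> ?r"
    proof
      assume "?g \<alpha> = ?r"
      then have "\<alpha> = ?g ?r" using gen_invol by metis
      then have "\<alpha> = - ?r" by (simp add: gen_root)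
      then show False using that r Pos_not_Neg Neg_iff by auto
    qed
    ultimately show ?thesis by simp
  qed
  have img: "{\<alpha>\<in>?P'. w (?g \<alpha>) \<in> Neg} = ?g ` {\<beta>\<in>?P'. w \<beta> \<in> Neg}"
  proof
    show "{\<alpha>\<in>?P'. w (?g \<alpha>) \<in> Neg} \<subseteq> ?g ` {\<beta>\<in>?P'. w \<beta> \<in> Neg}"
    proof
      fix \<alpha> assume "\<alpha> \<in> {\<alpha>\<in>?P'. w (?g \<alpha>) \<in> Neg}"
      then have "?g \<alpha> \<in> {\<beta>\<in>?P'. w \<beta> \<in> Neg}" using gP by auto
      moreover have "\<alpha> = ?g (?g \<alpha>)" by (simp add: gen_invol)
      ultimately show "\<alpha> \<in> ?g ` {\<beta>\<in>?P'. w \<beta> \<in> Neg}" by blast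
    qed
  next
    show "?g ` {\<beta>\<in>?P'. w \<beta> \<in> Neg} \<subseteq> {\<alpha>\<in>?P'. w (?g \<alpha>) \<in> Neg}"
      using gP by (auto simp: gen_invol)
  qed
  have inj: "inj_on ?g X" for X by (rule inj_onI) (metis gen_invol)
  have c1: "card {\<alpha>\<in>?P'. w (?g \<alpha>) \<in> Neg} = card {\<beta>\<in>?P'. w \<beta> \<in> Neg}"
    unfolding img by (rule card_image[OF inj])
  have A0: "Ninv (w \<circ> ?g) = card {\<alpha>\<in>?P'. w (?g \<alpha>) \<in> Neg} + (if w (?g ?r) \<in> Neg then 1 else 0)"
    unfolding Ninv_def using card_split[OF r, of "\<lambda>\<alpha>. w (?g \<alpha>) \<in> Neg"] by simp
  have e2: "w (?g ?r) = - w ?r" using W_neg[OF w] by (simp add: gen_root)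
  have e3: "(- w ?r \<in> Neg) = (w ?r \<in> Pos)" using Neg_iff by simp
  have A: "Ninv (w \<circ> ?g) = card {\<beta>\<in>?P'. w \<beta> \<in> Neg} + (if w ?r \<in> Pos then 1 else 0)"
    unfolding A0 c1 e2 e3 ..
  have B: "Ninv w = card {\<beta>\<in>?P'. w \<beta> \<in> Neg} + (if w ?r \<in> Neg then 1 else 0)"
    unfolding Ninv_def using card_split[OF r, of "\<lambda>\<alpha>. w \<alpha> \<in> Neg"] by simp
  show ?thesis unfolding A B by simp
qed

lemma len_id: "F4_len id = 0"
  using len_le[of "[]"] by simp

lemma len_N_word: "set ws \<subseteq> {1..4} \<Longrightarrow> F4_len (F4_word ws) = Ninv (F4_word ws)"
proof (induction ws rule: rev_induct)
  case Nil
  have e: "{\<alpha>\<in>Pos. id \<alpha> \<in> Neg} = {}" using Pos_not_Neg by auto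
  show ?case unfolding word_Nil len_id Ninv_def e by simp
next
  case (snoc t ws)
  have ws: "set ws \<subseteq> {1..4}" and t: "t \<in> {1..4}" using snoc.prems by auto
  let ?w = "F4_word ws"
  have w: "?w \<in> F4_W" using ws unfolding inW_iff by blast
  have e: "F4_word (ws @ [t]) = ?w \<circ> F4_gen t" by (simp add: word_append)
  have N: "Ninv (?w \<circ> F4_gen t) + (if ?w (F4_root t) \<in> Neg then 1 else 0)
       = Ninv ?w + (if ?w (F4_root t) \<in> Pos then 1 else 0)" by (rule N_right[OF w t])
  show ?case
  proof (cases "?w (F4_root t) \<in> Pos")
    case True
    then have "?w (F4_root t) \<notin> Neg" using Pos_not_Neg by blast
    then have n1: "Ninv (?w \<circ> F4_gen t) = Ninv ?w + 1" using N True by simp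
    show ?thesis unfolding e using n1 right_len_Pos[OF w t True] snoc.IH[OF ws] by linarith
  next
    case False
    then have n: "?w (F4_root t) \<in> Neg" using W_root_cases[OF w t] by blast
    then have n1: "Ninv (?w \<circ> F4_gen t) + 1 = Ninv ?w" using N False by simp
    show ?thesis unfolding e using n1 right_len_Neg[OF w t n] snoc.IH[OF ws] by linarith
  qed
qed

lemma len_N: "w \<in> F4_W \<Longrightarrow> F4_len w = Ninv w"
  unfolding inW_iff using len_N_word by blast

lemma len_bound: "w \<in> F4_W \<Longrightarrow> F4_len w \<le> card Pos"
  unfolding len_N Ninv_def by (rule card_mono[OF finite_Pos]) auto

lemma W_inv:
  assumes "w \<in> F4_W"
  shows "bij w \<and> inv w \<in> F4_W \<and> inv w \<circ> w = id \<and> w \<circ> inv w = id"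
proof -
  obtain ws where ws: "set ws \<subseteq> {1..4}" "F4_word ws = w" using assms unfolding inW_iff by blast
  have a: "F4_word (rev ws) \<circ> w = id" "w \<circ> F4_word (rev ws) = id"
    using word_rev[of ws] word_rev2[of ws] ws by auto
  then have b: "bij w" using o_bij by blast
  have "inv w = F4_word (rev ws)" using inv_unique_comp[OF a(2) a(1)] by simp
  moreover have "F4_word (rev ws) \<in> F4_W" using ws unfolding inW_iff by (intro exI[of _ "rev ws"]) auto
  ultimately show ?thesis using a b by simp
qed

lemma len_inv_le: "w \<in> F4_W \<Longrightarrow> F4_len (inv w) \<le> F4_len w"
proof -
  assume w: "w \<in> F4_W"
  obtain ws where ws: "set ws \<subseteq> {1..4}" "length ws = F4_len w" "F4_word ws = w" using len_ex[OF w] by blast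
  have a: "F4_word (rev ws) \<circ> w = id" "w \<circ> F4_word (rev ws) = id"
    using word_rev[of ws] word_rev2[of ws] ws by auto
  have "inv w = F4_word (rev ws)" using inv_unique_comp[OF a(2) a(1)] by simp
  then show ?thesis using len_le[of "rev ws"] ws by simp
qed

lemma len_inv: "w \<in> F4_W \<Longrightarrow> F4_len (inv w) = F4_len w"
proof -
  assume w: "w \<in> F4_W"
  have i: "inv w \<in> F4_W" "bij w" using W_inv[OF w] by auto
  have "F4_len (inv (inv w)) \<le> F4_len (inv w)" by (rule len_inv_le[OF i(1)])
  then have "F4_len w \<le> F4_len (inv w)" using inv_inv_eq[OF i(2)] by simp
  with len_inv_le[OF w] show ?thesis by simp
qed

lemma inv_gen: "inv (F4_gen s) = F4_gen s"
  using inv_unique_comp[OF gen_invol_o gen_invol_o] by simp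

lemma bij_gen: "bij (F4_gen s)"
  using o_bij[OF gen_invol_o gen_invol_o] .

lemma inv_gen_comp: "w \<in> F4_W \<Longrightarrow> inv (F4_gen s \<circ> w) = inv w \<circ> F4_gen s"
  using o_inv_distrib[OF bij_gen, of w s] W_inv inv_gen by metis

lemma left_len_Neg:
  assumes w: "w \<in> F4_W" and s: "s \<in> {1..4}" and n: "inv w (F4_root s) \<in> Neg"
  shows "F4_len (F4_gen s \<circ> w) + 1 = F4_len w"
proof -
  have iw: "inv w \<in> F4_W" using W_inv[OF w] by blast
  have "F4_len (F4_gen s \<circ> w) = F4_len (inv w \<circ> F4_gen s)"
    using len_inv[OF W_gen_left[OF w s]] inv_gen_comp[OF w] by simp
  then show ?thesis using right_len_Neg[OF iw s n] len_inv[OF w] by simp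
qed

lemma left_len_Pos:
  assumes w: "w \<in> F4_W" and s: "s \<in> {1..4}" and n: "inv w (F4_root s) \<in> Pos"
  shows "F4_len (F4_gen s \<circ> w) = F4_len w + 1"
proof -
  have iw: "inv w \<in> F4_W" using W_inv[OF w] by blast
  have "F4_len (F4_gen s \<circ> w) = F4_len (inv w \<circ> F4_gen s)"
    using len_inv[OF W_gen_left[OF w s]] inv_gen_comp[OF w] by simp
  then show ?thesis using right_len_Pos[OF iw s n] len_inv[OF w] by simp
qed

lemma left_pm:
  assumes w: "w \<in> F4_W" and s: "s \<in> {1..4}"
  shows "F4_len (F4_gen s \<circ> w) = F4_len w + 1 \<or> F4_len (F4_gen s \<circ> w) + 1 = F4_len w"
  using W_root_cases[OF conjunct1[OF conjunct2[OF W_inv[OF w]]] s] left_len_Neg[OF w s] left_len_Pos[OF w s]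
  by blast

lemma right_pm:
  assumes w: "w \<in> F4_W" and t: "t \<in> {1..4}"
  shows "F4_len (w \<circ> F4_gen t) = F4_len w + 1 \<or> F4_len (w \<circ> F4_gen t) + 1 = F4_len w"
  using W_root_cases[OF w t] right_len_Neg[OF w t] right_len_Pos[OF w t] by blast

section \<open>Maximal length\<close>

lemma cf_lin:
  "cf1 (a *\<^sub>R x + b *\<^sub>R y + c *\<^sub>R z + d *\<^sub>R u) = a * cf1 x + b * cf1 y + c * cf1 z + d * cf1 u"
  "cf2 (a *\<^sub>R x + b *\<^sub>R y + c *\<^sub>R z + d *\<^sub>R u) = a * cf2 x + b * cf2 y + c * cf2 z + d * cf2 u"
  "cf3 (a *\<^sub>R x + b *\<^sub>R y + c *\<^sub>R z + d *\<^sub>R u) = a * cf3 x + b * cf3 y + c * cf3 z + d * cf3 u"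
  "cf4 (a *\<^sub>R x + b *\<^sub>R y + c *\<^sub>R z + d *\<^sub>R u) = a * cf4 x + b * cf4 y + c * cf4 z + d * cf4 u"
  unfolding cf1_def cf2_def cf3_def cf4_def by (simp_all add: algebra_simps)

lemma cf_neg: "cf1 (-x) = - cf1 x" "cf2 (-x) = - cf2 x" "cf3 (-x) = - cf3 x" "cf4 (-x) = - cf4 x"
  unfolding cf1_def cf2_def cf3_def cf4_def by simp_all

lemma all_neg:
  assumes v: "v \<in> F4_W" and h: "\<forall>s\<in>{1..4}. v (F4_root s) \<in> Neg" and a: "\<alpha> \<in> Pos"
  shows "v \<alpha> \<in> Neg"
proof -
  have lin: "linear v" by (rule W_linear[OF v])
  let ?y1 = "v (F4_root 1)" and ?y2 = "v (F4_root 2)" and ?y3 = "v (F4_root 3)" and ?y4 = "v (F4_root 4)"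
  have yn: "-?y1 \<in> Pos" "-?y2 \<in> Pos" "-?y3 \<in> Pos" "-?y4 \<in> Pos" using h Neg_iff by auto
  have ye: "v \<alpha> = cf1 \<alpha> *\<^sub>R ?y1 + cf2 \<alpha> *\<^sub>R ?y2 + cf3 \<alpha> *\<^sub>R ?y3 + cf4 \<alpha> *\<^sub>R ?y4"
    apply (subst cf_decomp[of \<alpha>])
    by (simp add: linear_add[OF lin] linear_scale[OF lin])
  have ca: "cf1 \<alpha> \<ge> 0" "cf2 \<alpha> \<ge> 0" "cf3 \<alpha> \<ge> 0" "cf4 \<alpha> \<ge> 0" using Pos_cf[OF a] by auto
  have c1: "cf1 (-?y1) \<ge> 0" "cf1 (-?y2) \<ge> 0" "cf1 (-?y3) \<ge> 0" "cf1 (-?y4) \<ge> 0"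
    "cf2 (-?y1) \<ge> 0" "cf2 (-?y2) \<ge> 0" "cf2 (-?y3) \<ge> 0" "cf2 (-?y4) \<ge> 0"
    "cf3 (-?y1) \<ge> 0" "cf3 (-?y2) \<ge> 0" "cf3 (-?y3) \<ge> 0" "cf3 (-?y4) \<ge> 0"
    "cf4 (-?y1) \<ge> 0" "cf4 (-?y2) \<ge> 0" "cf4 (-?y3) \<ge> 0" "cf4 (-?y4) \<ge> 0"
    using Pos_cf[OF yn(1)] Pos_cf[OF yn(2)] Pos_cf[OF yn(3)] Pos_cf[OF yn(4)] by auto
  have le: "cf1 (v \<alpha>) \<le> 0" "cf2 (v \<alpha>) \<le> 0" "cf3 (v \<alpha>) \<le> 0" "cf4 (v \<alpha>) \<le> 0"
    unfolding ye cf_lin using ca c1 unfolding cf_neg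
    by (simp_all add: add_nonpos_nonpos mult_nonneg_nonpos)
  have "v \<alpha> \<in> Phi" using W_Phi[OF v] a unfolding Phi_def by blast
  moreover have "v \<alpha> \<notin> Pos"
  proof
    assume p: "v \<alpha> \<in> Pos"
    then have "cf1 (v \<alpha>) = 0" "cf2 (v \<alpha>) = 0" "cf3 (v \<alpha>) = 0" "cf4 (v \<alpha>) = 0"
      using Pos_cf[OF p] le by auto
    then have "v \<alpha> = 0" using cf_decomp[of "v \<alpha>"] by simp
    then show False using p zero_not_Pos by simp
  qed
  ultimately show ?thesis unfolding Phi_def by blast
qed

lemma max_len:
  assumes v: "v \<in> F4_W" and h: "\<forall>s\<in>{1..4}. v (F4_root s) \<in> Neg" and u: "u \<in> F4_W"
  shows "F4_len u \<le> F4_len v"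
proof -
  have "{\<alpha>\<in>Pos. v \<alpha> \<in> Neg} = Pos" using all_neg[OF v h] by auto
  then have "F4_len v = card Pos" unfolding len_N[OF v] Ninv_def by simp
  with len_bound[OF u] show ?thesis by simp
qed

lemma left_max:
  assumes w: "w \<in> F4_W" and h: "\<forall>s\<in>{1..4}. F4_len (F4_gen s \<circ> w) < F4_len w" and u: "u \<in> F4_W"
  shows "F4_len u \<le> F4_len w"
proof -
  have iw: "inv w \<in> F4_W" using W_inv[OF w] by blast
  have "\<forall>s\<in>{1..4}. inv w (F4_root s) \<in> Neg"
  proof
    fix s :: nat assume s: "s \<in> {1..4}"
    show "inv w (F4_root s) \<in> Neg"
      using W_root_cases[OF iw s] left_len_Pos[OF w s] h s by fastforce
  qed
  from max_len[OF iw this u] show ?thesis using len_inv[OF w] by simp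
qed


section \<open>Building axioms\<close>

lemma B_W: "F4_building Ch \<delta> \<Longrightarrow> x \<in> Ch \<Longrightarrow> y \<in> Ch \<Longrightarrow> \<delta> x y \<in> F4_W"
  unfolding F4_building_def by auto
lemma B_id: "F4_building Ch \<delta> \<Longrightarrow> x \<in> Ch \<Longrightarrow> y \<in> Ch \<Longrightarrow> \<delta> x y = id \<longleftrightarrow> x = y"
  unfolding F4_building_def by blast
lemma B_WD2: "F4_building Ch \<delta> \<Longrightarrow> C \<in> Ch \<Longrightarrow> D \<in> Ch \<Longrightarrow> C' \<in> Ch \<Longrightarrow> s \<in> {1..4} \<Longrightarrow>
   \<delta> C' C = F4_gen s \<Longrightarrow> \<delta> C' D = F4_gen s \<circ> \<delta> C D \<or> \<delta> C' D = \<delta> C D"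
  unfolding F4_building_def by blast
lemma B_WD2f: "F4_building Ch \<delta> \<Longrightarrow> C \<in> Ch \<Longrightarrow> D \<in> Ch \<Longrightarrow> C' \<in> Ch \<Longrightarrow> s \<in> {1..4} \<Longrightarrow>
   \<delta> C' C = F4_gen s \<Longrightarrow> F4_len (F4_gen s \<circ> \<delta> C D) = F4_len (\<delta> C D) + 1 \<Longrightarrow>
   \<delta> C' D = F4_gen s \<circ> \<delta> C D"
  unfolding F4_building_def by blast
lemma B_WD3: "F4_building Ch \<delta> \<Longrightarrow> C \<in> Ch \<Longrightarrow> D \<in> Ch \<Longrightarrow> s \<in> {1..4} \<Longrightarrow>
   \<exists>C'\<in>Ch. \<delta> C' C = F4_gen s \<and> \<delta> C' D = F4_gen s \<circ> \<delta> C D"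
  unfolding F4_building_def by blast

lemma gen_ne_id: "F4_gen s \<noteq> id"
proof
  assume "F4_gen s = id"
  then have e: "F4_root s = - F4_root s" using gen_root[of s] by simp
  have "F4_root s \<bullet> F4_root s = (- F4_root s) \<bullet> F4_root s"
    using arg_cong[OF e, of "\<lambda>x. x \<bullet> F4_root s"] by simp
  then have "F4_root s \<bullet> F4_root s = 0" by simp
  then show False using root_ne0[of s] by simp
qed

lemma gen_cancel: "F4_gen s \<circ> (F4_gen s \<circ> X) = X"
  by (simp add: fun_eq_iff gen_invol)

lemma adj_sym:
  assumes B: "F4_building Ch \<delta>" and C: "C \<in> Ch" "C' \<in> Ch" and s: "s \<in> {1..4}" and h: "\<delta> C' C = F4_gen s"
  shows "\<delta> C C' = F4_gen s"
proof -
  have "\<delta> C' C' = F4_gen s \<circ> \<delta> C C' \<or> \<delta> C' C' = \<delta> C C'" by (rule B_WD2[OF B C(1) C(2) C(2) s h])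
  moreover have "\<delta> C' C' = id" using B_id[OF B C(2) C(2)] by simp
  moreover have "\<delta> C C' \<noteq> id"
  proof
    assume "\<delta> C C' = id"
    then have "C = C'" using B_id[OF B C] by simp
    then show False using h gen_ne_id B_id[OF B C(1) C(1)] by simp
  qed
  ultimately have "id = F4_gen s \<circ> \<delta> C C'" by auto
  then have "F4_gen s \<circ> id = F4_gen s \<circ> (F4_gen s \<circ> \<delta> C C')" by simp
  then show ?thesis unfolding gen_cancel by simp
qed

fun wpath :: "'c set \<Rightarrow> ('c \<Rightarrow> 'c \<Rightarrow> (real^4 \<Rightarrow> real^4)) \<Rightarrow> 'c \<Rightarrow> nat list \<Rightarrow> 'c \<Rightarrow> bool" where
  "wpath Ch \<delta> C [] D \<longleftrightarrow> C = D \<and> C \<in> Ch"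
| "wpath Ch \<delta> C (s # ws) D \<longleftrightarrow> C \<in> Ch \<and> (\<exists>C'\<in>Ch. \<delta> C C' = F4_gen s \<and> wpath Ch \<delta> C' ws D)"

lemma wpath_in: "wpath Ch \<delta> C ws D \<Longrightarrow> C \<in> Ch \<and> D \<in> Ch"
  by (induction ws arbitrary: C) auto

lemma wpath_delta:
  assumes B: "F4_building Ch \<delta>"
  shows "wpath Ch \<delta> C ws D \<Longrightarrow> set ws \<subseteq> {1..4} \<Longrightarrow> F4_len (F4_word ws) = length ws \<Longrightarrow> \<delta> C D = F4_word ws"
proof (induction ws arbitrary: C)
  case Nil
  then have "C = D" "D \<in> Ch" by auto
  then show ?case using B_id[OF B, of D D] by (metis word_Nil)
next
  case (Cons s ws)
  have s: "s \<in> {1..4}" and ws: "set ws \<subseteq> {1..4}" using Cons.prems by auto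
  obtain C' where C': "C' \<in> Ch" "\<delta> C C' = F4_gen s" "wpath Ch \<delta> C' ws D" using Cons.prems(1) by auto
  have C: "C \<in> Ch" and D: "D \<in> Ch" using wpath_in[OF Cons.prems(1)] by auto
  have wW: "F4_word ws \<in> F4_W" using ws unfolding inW_iff by blast
  have l1: "F4_len (F4_word ws) \<le> length ws" by (rule len_le[OF ws])
  have l2: "F4_len (F4_gen s \<circ> F4_word ws) \<le> F4_len (F4_word ws) + 1" using left_pm[OF wW s] by auto
  have p3: "F4_len (F4_gen s \<circ> F4_word ws) = length ws + 1"
    using Cons.prems(3) by (simp only: word_Cons length_Cons Suc_eq_plus1)
  have red: "F4_len (F4_word ws) = length ws" using l1 l2 p3 by linarith
  have IH: "\<delta> C' D = F4_word ws" by (rule Cons.IH[OF C'(3) ws red])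
  have lenf: "F4_len (F4_gen s \<circ> \<delta> C' D) = F4_len (\<delta> C' D) + 1"
    unfolding IH using p3 red by linarith
  have "\<delta> C D = F4_gen s \<circ> \<delta> C' D"
    by (rule B_WD2f[OF B C'(1) D C s C'(2) lenf])
  then show ?case using IH by simp
qed

lemma wpath_exists:
  assumes B: "F4_building Ch \<delta>"
  shows "C \<in> Ch \<Longrightarrow> D \<in> Ch \<Longrightarrow> \<exists>ws. wpath Ch \<delta> C ws D \<and> set ws \<subseteq> {1..4} \<and> length ws = F4_len (\<delta> C D) \<and> F4_word ws = \<delta> C D"
proof (induction "F4_len (\<delta> C D)" arbitrary: C rule: less_induct)
  case less
  have w: "\<delta> C D \<in> F4_W" by (rule B_W[OF B less.prems])
  obtain us where us: "set us \<subseteq> {1..4}" "length us = F4_len (\<delta> C D)" "F4_word us = \<delta> C D"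
    using len_ex[OF w] by blast
  show ?case
  proof (cases us)
    case Nil
    then have "C = D" using us B_id[OF B less.prems] by simp
    then show ?thesis using less.prems Nil us by (intro exI[of _ "[]"]) simp
  next
    case (Cons s us')
    have s: "s \<in> {1..4}" and us': "set us' \<subseteq> {1..4}" using us Cons by auto
    obtain C' where C': "C' \<in> Ch" "\<delta> C' C = F4_gen s" "\<delta> C' D = F4_gen s \<circ> \<delta> C D"
      using B_WD3[OF B less.prems s] by blast
    have dCD: "\<delta> C D = F4_gen s \<circ> F4_word us'" using us(3) Cons by simp
    have e: "\<delta> C' D = F4_word us'" unfolding C'(3) dCD gen_cancel ..
    have lt: "F4_len (\<delta> C' D) < F4_len (\<delta> C D)" using len_le[OF us'] e us(2) Cons by simp
    obtain ws where ws: "wpath Ch \<delta> C' ws D" "set ws \<subseteq> {1..4}" "length ws = F4_len (\<delta> C' D)" "F4_word ws = \<delta> C' D"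
      using less.hyps[OF lt C'(1) less.prems(2)] by blast
    have sym: "\<delta> C C' = F4_gen s" by (rule adj_sym[OF B less.prems(1) C'(1) s C'(2)])
    have p: "wpath Ch \<delta> C (s # ws) D" using ws(1) sym C'(1) less.prems(1) by auto
    have wd: "F4_word (s # ws) = \<delta> C D" using ws(4) C'(3) by (simp add: gen_cancel)
    have "F4_len (\<delta> C D) \<le> length (s # ws)" using len_le[of "s # ws"] ws(2) s wd by simp
    then have "length (s # ws) = F4_len (\<delta> C D)" using lt ws(3) by simp
    then show ?thesis using p ws(2) s wd by (intro exI[of _ "s # ws"]) simp
  qed
qed

lemma wpath_snoc:
  "wpath Ch \<delta> C xs M \<Longrightarrow> D \<in> Ch \<Longrightarrow> \<delta> M D = F4_gen s \<Longrightarrow> wpath Ch \<delta> C (xs @ [s]) D"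
  by (induction xs arbitrary: C) auto

lemma wpath_rev:
  assumes B: "F4_building Ch \<delta>"
  shows "wpath Ch \<delta> C ws D \<Longrightarrow> set ws \<subseteq> {1..4} \<Longrightarrow> wpath Ch \<delta> D (rev ws) C"
proof (induction ws arbitrary: C)
  case Nil then show ?case by auto
next
  case (Cons s ws)
  obtain C' where C': "C' \<in> Ch" "\<delta> C C' = F4_gen s" "wpath Ch \<delta> C' ws D" using Cons.prems(1) by auto
  have C: "C \<in> Ch" using Cons.prems(1) by simp
  have s: "s \<in> {1..4}" using Cons.prems(2) by simp
  have "wpath Ch \<delta> D (rev ws) C'" using Cons.IH[OF C'(3)] Cons.prems(2) by simp
  moreover have "\<delta> C' C = F4_gen s" by (rule adj_sym[OF B C'(1) C s C'(2)])
  ultimately show ?case using wpath_snoc C by simp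
qed

lemma word_rev_inv: "F4_word (rev ws) = inv (F4_word ws)"
  using inv_unique_comp[OF word_rev2 word_rev] by simp

lemma delta_inv:
  assumes B: "F4_building Ch \<delta>" and C: "C \<in> Ch" and D: "D \<in> Ch"
  shows "\<delta> D C = inv (\<delta> C D)"
proof -
  obtain ws where ws: "wpath Ch \<delta> C ws D" "set ws \<subseteq> {1..4}" "length ws = F4_len (\<delta> C D)" "F4_word ws = \<delta> C D"
    using wpath_exists[OF B C D] by blast
  have p: "wpath Ch \<delta> D (rev ws) C" by (rule wpath_rev[OF B ws(1,2)])
  have w: "\<delta> C D \<in> F4_W" by (rule B_W[OF B C D])
  have e: "F4_word (rev ws) = inv (\<delta> C D)" using word_rev_inv ws(4) by simp
  have "F4_len (F4_word (rev ws)) = length (rev ws)" using e len_inv[OF w] ws(3) by simp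
  then have "\<delta> D C = F4_word (rev ws)" using wpath_delta[OF B p] ws(2) by simp
  then show ?thesis using e by simp
qed

lemma B_WD2r:
  assumes B: "F4_building Ch \<delta>" and C: "C \<in> Ch" and D: "D \<in> Ch" and D': "D' \<in> Ch" and t: "t \<in> {1..4}"
    and h: "\<delta> D' D = F4_gen t"
  shows "(\<delta> C D' = \<delta> C D \<circ> F4_gen t \<or> \<delta> C D' = \<delta> C D) \<and>
         (F4_len (\<delta> C D \<circ> F4_gen t) = F4_len (\<delta> C D) + 1 \<longrightarrow> \<delta> C D' = \<delta> C D \<circ> F4_gen t)"
proof -
  let ?w = "\<delta> C D"
  have w: "?w \<in> F4_W" by (rule B_W[OF B C D])
  have iw: "inv ?w \<in> F4_W" "bij ?w" using W_inv[OF w] by auto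
  have i1: "\<delta> C D' = inv (\<delta> D' C)" by (rule delta_inv[OF B D' C])
  have i2: "\<delta> D C = inv ?w" by (rule delta_inv[OF B C D])
  have k: "inv (F4_gen t \<circ> inv ?w) = ?w \<circ> F4_gen t"
    using inv_gen_comp[OF iw(1)] inv_inv_eq[OF iw(2)] by simp
  have c: "\<delta> D' C = F4_gen t \<circ> inv ?w \<or> \<delta> D' C = inv ?w"
    using B_WD2[OF B D C D' t h] i2 by simp
  have "\<delta> C D' = ?w \<circ> F4_gen t \<or> \<delta> C D' = ?w"
    using c i1 k inv_inv_eq[OF iw(2)] by auto
  moreover have "\<delta> C D' = ?w \<circ> F4_gen t" if l: "F4_len (?w \<circ> F4_gen t) = F4_len ?w + 1"
  proof -
    have "F4_len (F4_gen t \<circ> inv ?w) = F4_len (inv (F4_gen t \<circ> inv ?w))"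
      using len_inv[OF W_gen_left[OF iw(1) t]] by simp
    also have "\<dots> = F4_len (inv ?w) + 1" using k l len_inv[OF w] by simp
    finally have "F4_len (F4_gen t \<circ> \<delta> D C) = F4_len (\<delta> D C) + 1" using i2 by simp
    then have "\<delta> D' C = F4_gen t \<circ> \<delta> D C" by (rule B_WD2f[OF B D C D' t h])
    then show ?thesis using i1 i2 k by simp
  qed
  ultimately show ?thesis by blast
qed


section \<open>Galleries\<close>

lemma wpath_gallery:
  "wpath Ch \<delta> C ws D \<Longrightarrow> set ws \<subseteq> {1..4} \<Longrightarrow>
   \<exists>g. gallery Ch \<delta> g \<and> hd g = C \<and> last g = D \<and> length g = Suc (length ws)"
proof (induction ws arbitrary: C)
  case Nil
  then have "gallery Ch \<delta> [C]" "hd [C] = C" "last [C] = D" "length [C] = Suc (length ([]::nat list))"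
    unfolding gallery_def by auto
  then show ?case by blast
next
  case (Cons s ws)
  obtain C' where C': "C' \<in> Ch" "\<delta> C C' = F4_gen s" "wpath Ch \<delta> C' ws D" using Cons.prems(1) by auto
  have C: "C \<in> Ch" using Cons.prems(1) by simp
  obtain g where g: "gallery Ch \<delta> g" "hd g = C'" "last g = D" "length g = Suc (length ws)"
    using Cons.IH[OF C'(3)] Cons.prems(2) by auto
  have gne: "g \<noteq> []" using g(1) unfolding gallery_def by simp
  have adj: "adjacent Ch \<delta> C C'" unfolding adjacent_def using C C'(1,2) Cons.prems(2) by auto
  have "gallery Ch \<delta> (C # g)"
    unfolding gallery_def
  proof (intro conjI allI impI)
    show "C # g \<noteq> []" by simp
    show "set (C # g) \<subseteq> Ch" using C g(1) unfolding gallery_def by auto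
    fix k assume k: "Suc k < length (C # g)"
    show "adjacent Ch \<delta> ((C # g) ! k) ((C # g) ! Suc k)"
    proof (cases k)
      case 0 then show ?thesis using adj g(2) gne by (simp add: hd_conv_nth)
    next
      case (Suc j) then show ?thesis using g(1) k unfolding gallery_def by auto
    qed
  qed
  then show ?case using g gne by (intro exI[of _ "C # g"]) auto
qed

lemma gallery_len:
  assumes B: "F4_building Ch \<delta>"
  shows "gallery Ch \<delta> g \<Longrightarrow> F4_len (\<delta> (hd g) (last g)) + 1 \<le> length g"
proof (induction g)
  case Nil then show ?case unfolding gallery_def by simp
next
  case (Cons x g)
  show ?case
  proof (cases g)
    case Nil
    then have "x \<in> Ch" using Cons.prems unfolding gallery_def by simp
    then have "\<delta> x x = id" using B_id[OF B] by simp
    then have "\<delta> (hd (x # g)) (last (x # g)) = id" using Nil by simp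
    then have "F4_len (\<delta> (hd (x # g)) (last (x # g))) = 0" by (simp only: len_id)
    then show ?thesis by simp
  next
    case (Cons y rest)
    have gal: "gallery Ch \<delta> g"
      unfolding gallery_def
    proof (intro conjI allI impI)
      show "g \<noteq> []" using Cons by simp
      show "set g \<subseteq> Ch" using Cons.prems unfolding gallery_def by auto
      fix k assume "Suc k < length g"
      then have "Suc (Suc k) < length (x # g)" by simp
      then have "adjacent Ch \<delta> ((x # g) ! Suc k) ((x # g) ! Suc (Suc k))"
        using Cons.prems unfolding gallery_def by blast
      then show "adjacent Ch \<delta> (g ! k) (g ! Suc k)" by simp
    qed
    have "adjacent Ch \<delta> ((x # g) ! 0) ((x # g) ! Suc 0)"
      using Cons.prems \<open>g = y # rest\<close> unfolding gallery_def by auto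
    then obtain i where i: "i \<in> {1..4}" "\<delta> x y = F4_gen i" "x \<in> Ch" "y \<in> Ch"
      using \<open>g = y # rest\<close> unfolding adjacent_def by auto
    have D: "last g \<in> Ch" using gal unfolding gallery_def using last_in_set \<open>g = y # rest\<close> by blast
    have IH: "F4_len (\<delta> y (last g)) + 1 \<le> length g" using Cons.IH[OF gal] \<open>g = y # rest\<close> by simp
    have c: "\<delta> x (last g) = F4_gen i \<circ> \<delta> y (last g) \<or> \<delta> x (last g) = \<delta> y (last g)"
      by (rule B_WD2[OF B i(4) D i(3) i(1) i(2)])
    have "F4_len (F4_gen i \<circ> \<delta> y (last g)) \<le> F4_len (\<delta> y (last g)) + 1"
      using left_pm[OF B_W[OF B i(4) D] i(1)] by auto
    then have "F4_len (\<delta> x (last g)) \<le> F4_len (\<delta> y (last g)) + 1" using c by auto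
    then show ?thesis using IH \<open>g = y # rest\<close> by simp
  qed
qed

lemma gdist_eq:
  assumes B: "F4_building Ch \<delta>" and C: "C \<in> Ch" and D: "D \<in> Ch"
  shows "gdist Ch \<delta> C D = F4_len (\<delta> C D)"
  unfolding gdist_def
proof (rule Least_equality)
  obtain ws where ws: "wpath Ch \<delta> C ws D" "set ws \<subseteq> {1..4}" "length ws = F4_len (\<delta> C D)"
    using wpath_exists[OF B C D] by blast
  show "\<exists>g. gallery Ch \<delta> g \<and> hd g = C \<and> last g = D \<and> length g = Suc (F4_len (\<delta> C D))"
    using wpath_gallery[OF ws(1,2)] ws(3) by simp
next
  fix n assume "\<exists>g. gallery Ch \<delta> g \<and> hd g = C \<and> last g = D \<and> length g = Suc n"
  then obtain g where "gallery Ch \<delta> g" "hd g = C" "last g = D" "length g = Suc n" by blast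
  then show "F4_len (\<delta> C D) \<le> n" using gallery_len[OF B] by fastforce
qed

lemma norm_diff: "s \<in> {1..4} \<Longrightarrow> F4_root (5 - s) \<bullet> F4_root (5 - s) \<noteq> F4_root s \<bullet> F4_root s"
proof -
  assume "s \<in> {1..4}"
  then have "s = 1 \<or> s = 2 \<or> s = 3 \<or> s = 4" by auto
  then show ?thesis by (auto simp: root_v4 root1_v4')
qed

theorem lemma4p1:
  fixes Ch :: "'c set" and \<delta> :: "'c \<Rightarrow> 'c \<Rightarrow> (real^4 \<Rightarrow> real^4)" and \<theta> :: "'c \<Rightarrow> 'c"
  assumes "F4_building Ch \<delta>" and "thick Ch \<delta>" and "duality Ch \<delta> \<theta>"
  shows "\<not> domestic Ch \<delta> \<theta>"
proof
  assume dom: "domestic Ch \<delta> \<theta>"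
  have B: "F4_building Ch \<delta>" by (rule assms(1))
  have bij: "bij_betw \<theta> Ch Ch"
    and dual: "\<forall>x\<in>Ch. \<forall>y\<in>Ch. \<forall>i\<in>{1..4}. \<delta> x y = F4_gen i \<longleftrightarrow> \<delta> (\<theta> x) (\<theta> y) = F4_gen (5 - i)"
    using assms(3) unfolding duality_def by auto
  have thC: "\<theta> x \<in> Ch" if "x \<in> Ch" for x using bij bij_betwE that by blast
  define f where "f C = F4_len (\<delta> C (\<theta> C))" for C
  have fb: "f C \<le> card Pos" if "C \<in> Ch" for C
    using len_bound[OF B_W[OF B that thC[OF that]]] f_def by simp
  have ne: "Ch \<noteq> {}" using B unfolding F4_building_def by blast
  have fin: "finite (f ` Ch)" by (rule finite_subset[of _ "{..card Pos}"]) (auto dest: fb)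
  have "Max (f ` Ch) \<in> f ` Ch" using Max_in[OF fin] ne by simp
  then obtain C where C: "C \<in> Ch" and fC: "f C = Max (f ` Ch)" by auto
  have Cmax: "f C' \<le> f C" if "C' \<in> Ch" for C' using Max_ge[OF fin] that fC by simp
  define w where "w = \<delta> C (\<theta> C)"
  have TC: "\<theta> C \<in> Ch" by (rule thC[OF C])
  have wW: "w \<in> F4_W" unfolding w_def by (rule B_W[OF B C TC])
  have fCw: "f C = F4_len w" unfolding f_def w_def ..
  have claim: "\<forall>s\<in>{1..4}. F4_len (F4_gen s \<circ> w) < F4_len w"
  proof
    fix s :: nat assume s: "s \<in> {1..4}"
    show "F4_len (F4_gen s \<circ> w) < F4_len w"
    proof (rule ccontr)
      assume "\<not> F4_len (F4_gen s \<circ> w) < F4_len w"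
      then have ls: "F4_len (F4_gen s \<circ> w) = F4_len w + 1" using left_pm[OF wW s] by auto
      define t where "t = 5 - s"
      have t: "t \<in> {1..4}" using s t_def by auto
      have dualst: "\<delta> (\<theta> x) (\<theta> y) = F4_gen t" if "x \<in> Ch" "y \<in> Ch" "\<delta> x y = F4_gen s" for x y
        using dual that s t_def by blast
      have sw: "F4_gen s \<circ> w \<in> F4_W" by (rule W_gen_left[OF wW s])
      show False
      proof (cases "F4_len (w \<circ> F4_gen t) = F4_len w + 1")
        case True
        have p1: "w (F4_root t) \<in> Pos" using W_root_cases[OF wW t] right_len_Neg[OF wW t] True by fastforce
        have "w (F4_root t) \<noteq> F4_root s"
        proof
          assume e: "w (F4_root t) = F4_root s"
          have "F4_root t \<bullet> F4_root t = F4_root s \<bullet> F4_root s"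
            using W_inner[OF wW, of "F4_root t" "F4_root t"] e by simp
          then show False using norm_diff[OF s] t_def by simp
        qed
        then have p2: "(F4_gen s \<circ> w) (F4_root t) \<in> Pos" using gen_Pos[OF s p1] by simp
        have l2: "F4_len (F4_gen s \<circ> w \<circ> F4_gen t) = F4_len (F4_gen s \<circ> w) + 1"
          by (rule right_len_Pos[OF sw t p2])
        obtain C' where C': "C' \<in> Ch" "\<delta> C' C = F4_gen s" using B_WD3[OF B C C s] by blast
        have a1: "\<delta> C C' = F4_gen s" by (rule adj_sym[OF B C C'(1) s C'(2)])
        have lsw: "F4_len (F4_gen s \<circ> \<delta> C (\<theta> C)) = F4_len (\<delta> C (\<theta> C)) + 1" using ls unfolding w_def .
        have a2: "\<delta> C' (\<theta> C) = F4_gen s \<circ> w" unfolding w_def by (rule B_WD2f[OF B C TC C'(1) s C'(2) lsw])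
        have a3: "\<delta> (\<theta> C) (\<theta> C') = F4_gen t" by (rule dualst[OF C C'(1) a1])
        have a4: "\<delta> (\<theta> C') (\<theta> C) = F4_gen t" by (rule adj_sym[OF B thC[OF C'(1)] TC t a3])
        have l2': "F4_len (\<delta> C' (\<theta> C) \<circ> F4_gen t) = F4_len (\<delta> C' (\<theta> C)) + 1" unfolding a2 by (rule l2)
        have a5: "\<delta> C' (\<theta> C') = \<delta> C' (\<theta> C) \<circ> F4_gen t"
          using conjunct2[OF B_WD2r[OF B C'(1) TC thC[OF C'(1)] t a4]] l2' by blast
        have "f C' = F4_len w + 2" unfolding f_def a5 a2 l2 ls by simp
        then show False using Cmax[OF C'(1)] fCw by simp
      next
        case False
        then have ln: "F4_len (w \<circ> F4_gen t) + 1 = F4_len w" using right_pm[OF wW t] by auto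
        obtain D1 D2 where D: "D1 \<in> Ch" "D2 \<in> Ch" "D1 \<noteq> D2" "\<delta> C D1 = F4_gen s" "\<delta> C D2 = F4_gen s"
          using assms(2) C s unfolding thick_def by blast
        have key: "\<delta> C (\<theta> D) = w \<circ> F4_gen t" if D: "D \<in> Ch" "\<delta> C D = F4_gen s" for D
        proof -
          have b1: "\<delta> D C = F4_gen s" by (rule adj_sym[OF B D(1) C s D(2)])
          have lsw: "F4_len (F4_gen s \<circ> \<delta> C (\<theta> C)) = F4_len (\<delta> C (\<theta> C)) + 1" using ls unfolding w_def .
          have b2: "\<delta> D (\<theta> C) = F4_gen s \<circ> w" unfolding w_def by (rule B_WD2f[OF B C TC D(1) s b1 lsw])
          have b3: "\<delta> (\<theta> C) (\<theta> D) = F4_gen t" by (rule dualst[OF C D(1) D(2)])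
          have b4: "\<delta> (\<theta> D) (\<theta> C) = F4_gen t" by (rule adj_sym[OF B thC[OF D(1)] TC t b3])
          have b5: "\<delta> D (\<theta> D) = \<delta> D (\<theta> C) \<circ> F4_gen t \<or> \<delta> D (\<theta> D) = \<delta> D (\<theta> C)"
            using conjunct1[OF B_WD2r[OF B D(1) TC thC[OF D(1)] t b4]] .
          have b6: "\<delta> D (\<theta> D) \<noteq> F4_gen s \<circ> w"
          proof
            assume "\<delta> D (\<theta> D) = F4_gen s \<circ> w"
            then have "f D = F4_len w + 1" unfolding f_def using ls by simp
            then show False using Cmax[OF D(1)] fCw by simp
          qed
          have b7: "\<delta> D (\<theta> D) = F4_gen s \<circ> w \<circ> F4_gen t" using b5 b6 unfolding b2 by blast
          have c1: "\<delta> C (\<theta> D) = F4_gen s \<circ> \<delta> D (\<theta> D) \<or> \<delta> C (\<theta> D) = \<delta> D (\<theta> D)"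
            by (rule B_WD2[OF B D(1) thC[OF D(1)] C s D(2)])
          have c2: "\<delta> C (\<theta> D) = w \<circ> F4_gen t \<or> \<delta> C (\<theta> D) = w"
            using conjunct1[OF B_WD2r[OF B C TC thC[OF D(1)] t b4]] unfolding w_def .
          have gsw: "F4_gen s \<circ> (F4_gen s \<circ> w \<circ> F4_gen t) = w \<circ> F4_gen t" by (simp add: fun_eq_iff gen_invol)
          show ?thesis
          proof (rule ccontr)
            assume nq: "\<delta> C (\<theta> D) \<noteq> w \<circ> F4_gen t"
            then have "\<delta> C (\<theta> D) = w" using c2 by blast
            with c1 nq have "F4_gen s \<circ> w \<circ> F4_gen t = w" unfolding b7 gsw by auto
            then have "F4_gen s \<circ> w \<circ> F4_gen t \<circ> F4_gen t = w \<circ> F4_gen t" by simp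
            then have "F4_gen s \<circ> w = w \<circ> F4_gen t" unfolding gen_gen_right .
            then show False using ls ln by simp
          qed
        qed
        have k1: "\<delta> C (\<theta> D1) = w \<circ> F4_gen t" by (rule key[OF D(1) D(4)])
        have k2: "\<delta> C (\<theta> D2) = w \<circ> F4_gen t" by (rule key[OF D(2) D(5)])
        have d1: "\<delta> D1 C = F4_gen s" by (rule adj_sym[OF B D(1) C s D(4)])
        have "\<delta> D1 D2 = F4_gen s \<circ> \<delta> C D2 \<or> \<delta> D1 D2 = \<delta> C D2" by (rule B_WD2[OF B C D(2) D(1) s d1])
        moreover have "F4_gen s \<circ> \<delta> C D2 = id" unfolding D(5) by (rule gen_invol_o)
        moreover have "\<delta> D1 D2 \<noteq> id" using B_id[OF B D(1) D(2)] D(3) by simp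
        ultimately have d12: "\<delta> D1 D2 = F4_gen s" using D(5) by auto
        have e1: "\<delta> (\<theta> D1) (\<theta> D2) = F4_gen t" by (rule dualst[OF D(1) D(2) d12])
        have e2: "\<delta> (\<theta> D2) (\<theta> D1) = F4_gen t" by (rule adj_sym[OF B thC[OF D(2)] thC[OF D(1)] t e1])
        have lf: "F4_len (\<delta> C (\<theta> D1) \<circ> F4_gen t) = F4_len (\<delta> C (\<theta> D1)) + 1"
          unfolding k1 gen_gen_right using ln by simp
        have "\<delta> C (\<theta> D2) = \<delta> C (\<theta> D1) \<circ> F4_gen t"
          using conjunct2[OF B_WD2r[OF B C thC[OF D(1)] thC[OF D(2)] t e2]] lf by blast
        then have "w \<circ> F4_gen t = w" unfolding k1 k2 gen_gen_right .
        then show False using ln by simp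
      qed
    qed
  qed
  have opp: "opposite Ch \<delta> C (\<theta> C)"
    unfolding opposite_def
  proof (intro conjI ballI)
    show "C \<in> Ch" "\<theta> C \<in> Ch" using C TC by auto
    fix u v assume uv: "u \<in> Ch" "v \<in> Ch"
    have "F4_len (\<delta> u v) \<le> F4_len w" by (rule left_max[OF wW claim B_W[OF B uv]])
    then show "gdist Ch \<delta> u v \<le> gdist Ch \<delta> C (\<theta> C)"
      using gdist_eq[OF B uv] gdist_eq[OF B C TC] w_def by simp
  qed
  then show False using dom C unfolding domestic_def by blast
qed

end
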